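(* Let $K$ be a field, $S=K[x_1,\ldots,x_n,y_1,\ldots,y_n]$ standard bigraded with $\deg x_i=(1,0)$, $\deg y_i=(0,1)$, let $>$ be the reverse lexicographic term order induced by $x_1>x_2>\cdots>x_n>y_1>\cdots>y_n$, and let $\phi:S\to S$ be the $K$-algebra homomorphism with $\phi(x_i)=x_i$ and $\phi(y_i)=x_i$. Let $f\in S$ be bihomogeneous of degree $(s,t)$ whose initial monomial is $\operatorname{in}(f)=x_{i_1}\cdots x_{i_s}y_{j_1}\cdots y_{j_t}$ with $i_1\leq\cdots\leq i_s\leq j_1\leq\cdots\leq j_t$. Then $\operatorname{in}(\phi(f))=\phi(\operatorname{in}(f))$ and $\operatorname{in}(f)=\phi(\operatorname{in}(f))^{(t)}$.
   Context: For a form $g=\sum_{1\le i_1\le\cdots\le i_e\le n}a_{i_1\cdots i_e}x_{i_1}\cdots x_{i_e}$ of degree $(e,0)$ and $0\le k\le e$, set $g^{(k)}=\sum a_{i_1\cdots i_e}x_{i_1}\cdots x_{i_{e-k}}y_{i_{e-k+1}}\cdots y_{i_e}$ (replace the $k$ variables with largest indices by the corresponding $y$'s); in particular for a monomial $x_{i_1}\cdots x_{i_e}$ with $i_1\le\cdots\le i_e$, its $(k)$-version is $x_{i_1}\cdots x_{i_{e-k}}y_{i_{e-k+1}}\cdots y_{i_e}$. $\operatorname{in}(\cdot)$ denotes the initial monomial with respect to $>$. *)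

theory Defs
  imports Main "HOL-Library.Poly_Mapping"
begin

text \<open>Variables of S = K[x_1..x_n, y_1..y_n]: X i stands for x_i, Y i for y_i (1 <= i <= n).\<close>

datatype var = X nat | Y nat

type_synonym mon = "var \<Rightarrow>\<^sub>0 nat"
type_synonym 'k mpoly = "mon \<Rightarrow>\<^sub>0 'k"

definition vars :: "nat \<Rightarrow> var set" where
  "vars n = X ` {1..n} \<union> Y ` {1..n}"

definition is_mon :: "nat \<Rightarrow> mon \<Rightarrow> bool" where
  "is_mon n m \<longleftrightarrow> Poly_Mapping.keys m \<subseteq> vars n"

definition is_poly :: "nat \<Rightarrow> 'k::zero mpoly \<Rightarrow> bool" where
  "is_poly n f \<longleftrightarrow> (\<forall>m\<in>Poly_Mapping.keys f. is_mon n m)"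

text \<open>Position of a variable in the order x_1 > ... > x_n > y_1 > ... > y_n
  (smaller rank = larger variable).\<close>
fun rank :: "nat \<Rightarrow> var \<Rightarrow> nat" where
  "rank n (X i) = i"
| "rank n (Y i) = n + i"

definition xdeg :: "nat \<Rightarrow> mon \<Rightarrow> nat" where
  "xdeg n m = (\<Sum>i\<in>{1..n}. Poly_Mapping.lookup m (X i))"

definition ydeg :: "nat \<Rightarrow> mon \<Rightarrow> nat" where
  "ydeg n m = (\<Sum>i\<in>{1..n}. Poly_Mapping.lookup m (Y i))"

definition tdeg :: "nat \<Rightarrow> mon \<Rightarrow> nat" where
  "tdeg n m = xdeg n m + ydeg n m"

definition revlex_gt :: "nat \<Rightarrow> mon \<Rightarrow> mon \<Rightarrow> bool" where
  "revlex_gt n m1 m2 \<longleftrightarrow>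
     tdeg n m1 > tdeg n m2 \<or>
     (tdeg n m1 = tdeg n m2 \<and>
      (\<exists>v\<in>vars n. Poly_Mapping.lookup m1 v < Poly_Mapping.lookup m2 v \<and>
         (\<forall>w\<in>vars n. rank n w > rank n v \<longrightarrow> Poly_Mapping.lookup m1 w = Poly_Mapping.lookup m2 w)))"

definition in_mon :: "nat \<Rightarrow> 'k::zero mpoly \<Rightarrow> mon" where
  "in_mon n f = (THE m. m \<in> Poly_Mapping.keys f \<and> (\<forall>m'\<in>Poly_Mapping.keys f. m' \<noteq> m \<longrightarrow> revlex_gt n m m'))"

definition bihom :: "nat \<Rightarrow> nat \<Rightarrow> nat \<Rightarrow> 'k::zero mpoly \<Rightarrow> bool" where
  "bihom n s t f \<longleftrightarrow> (\<forall>m\<in>Poly_Mapping.keys f. xdeg n m = s \<and> ydeg n m = t)"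

definition phi_mon :: "mon \<Rightarrow> mon" where
  "phi_mon m = Abs_poly_mapping
     (\<lambda>v. case v of X i \<Rightarrow> Poly_Mapping.lookup m (X i) + Poly_Mapping.lookup m (Y i) | Y i \<Rightarrow> 0)"

definition phi :: "'k::comm_monoid_add mpoly \<Rightarrow> 'k mpoly" where
  "phi f = (\<Sum>m\<in>Poly_Mapping.keys f. Poly_Mapping.single (phi_mon m) (Poly_Mapping.lookup f m))"

definition mon_of :: "var list \<Rightarrow> mon" where
  "mon_of vs = sum_list (map (\<lambda>v. Poly_Mapping.single v 1) vs)"

definition xindices :: "nat \<Rightarrow> mon \<Rightarrow> nat list" where
  "xindices n m = concat (map (\<lambda>i. replicate (Poly_Mapping.lookup m (X i)) i) [1..<n+1])"

text \<open>u^(k): replace the k variables with largest indices by the corresponding y's.\<close>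
definition upper :: "nat \<Rightarrow> nat \<Rightarrow> mon \<Rightarrow> mon" where
  "upper n k m = (let l = xindices n m; e = length l in
      mon_of (map X (take (e - k) l) @ map Y (drop (e - k) l)))"

end

theory Submission
  imports Defs "HOL-Library.Multiset"
begin

abbreviation lk :: "mon \<Rightarrow> var \<Rightarrow> nat" where "lk \<equiv> Poly_Mapping.lookup"

lemma lookup_phi_mon:
  "lk (phi_mon m) (X i) = lk m (X i) + lk m (Y i)"
  "lk (phi_mon m) (Y i) = 0"
proof -
  let ?g = "\<lambda>v. case v of X i \<Rightarrow> lk m (X i) + lk m (Y i) | Y i \<Rightarrow> 0"
  let ?p = "\<lambda>v. case v of X i \<Rightarrow> i | Y i \<Rightarrow> i"
  have "{v. ?g v \<noteq> 0} \<subseteq> X ` (?p ` Poly_Mapping.keys m)"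
  proof
    fix v assume "v \<in> {v. ?g v \<noteq> 0}"
    then obtain i where v: "v = X i" and "lk m (X i) \<noteq> 0 \<or> lk m (Y i) \<noteq> 0"
      by (cases v) auto
    then have "X i \<in> Poly_Mapping.keys m \<or> Y i \<in> Poly_Mapping.keys m" by (simp add: in_keys_iff)
    then have "i \<in> ?p ` Poly_Mapping.keys m" by (auto intro: rev_image_eqI)
    then show "v \<in> X ` (?p ` Poly_Mapping.keys m)" using v by blast
  qed
  then have fin: "finite {v. ?g v \<noteq> 0}" by (rule finite_subset) auto
  show "lk (phi_mon m) (X i) = lk m (X i) + lk m (Y i)" "lk (phi_mon m) (Y i) = 0"
    unfolding phi_mon_def using fin by simp_all
qed

lemma mon_of_append: "mon_of (a @ b) = mon_of a + mon_of b"
  by (simp add: mon_of_def)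

lemma lookup_mon_of: "lk (mon_of vs) w = count (mset vs) w"
  by (induction vs) (auto simp: mon_of_def lookup_add lookup_single)

lemma count_map_X: "count (mset (map X is)) (X i) = count (mset is) i"
  by (induction "is") auto
lemma count_map_Y: "count (mset (map Y is)) (Y i) = count (mset is) i"
  by (induction "is") auto
lemma count_map_XY: "count (mset (map X is)) (Y i) = 0" "count (mset (map Y is)) (X i) = 0"
  by (induction "is") auto

lemma lookup_u:
  "lk (mon_of (map X is @ map Y js)) (X i) = count (mset is) i"
  "lk (mon_of (map X is @ map Y js)) (Y i) = count (mset js) i"
  by (simp_all only: lookup_mon_of mset_append count_union count_map_X count_map_Y count_map_XY)

lemma sum_count_size:
  assumes "set_mset M \<subseteq> A" "finite A"
  shows "(\<Sum>a\<in>A. count M a) = size M"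
  using assms
proof (induction M)
  case empty then show ?case by simp
next
  case (add x M)
  then have "(\<Sum>a\<in>A. count (add_mset x M) a) = (\<Sum>a\<in>A. count M a + (if a = x then 1 else 0))"
    by (intro sum.cong) auto
  also have "\<dots> = (\<Sum>a\<in>A. count M a) + 1" using add.prems
    by (simp add: sum.distrib)
  finally show ?case using add by simp
qed

lemma concat_rep_count:
  "count (mset (concat (map (\<lambda>i. replicate (c i) i) [1..<n+1]))) x = (if 1 \<le> x \<and> x \<le> n then c x else 0)"
  by (induction n) auto

lemma concat_rep_sorted:
  "sorted (concat (map (\<lambda>i. replicate (c i) i) [1..<n+1]))"
proof (induction n)
  case 0 then show ?case by simp
next
  case (Suc n)
  have "set (concat (map (\<lambda>i. replicate (c i) i) [1..<n+1])) \<subseteq> {..n}" by auto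
  then show ?case using Suc by (auto simp: sorted_append)
qed

lemma concat_rep_eq:
  assumes "sorted l" "set l \<subseteq> {1..n}"
  shows "concat (map (\<lambda>i. replicate (count (mset l) i) i) [1..<n+1]) = l"
proof -
  have "mset (concat (map (\<lambda>i. replicate (count (mset l) i) i) [1..<n+1])) = mset l"
  proof (rule multiset_eqI)
    fix x
    show "count (mset (concat (map (\<lambda>i. replicate (count (mset l) i) i) [1..<n+1]))) x = count (mset l) x"
      unfolding concat_rep_count using assms(2) by (auto simp: count_eq_zero_iff)
  qed
  then show ?thesis using assms(1) concat_rep_sorted
    by (metis properties_for_sort sorted_sort_id)
qed


lemma rank_inj: "v \<in> vars n \<Longrightarrow> w \<in> vars n \<Longrightarrow> rank n v = rank n w \<Longrightarrow> v = w"
  by (auto simp: vars_def)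

lemma revlex_asym: "revlex_gt n a b \<Longrightarrow> \<not> revlex_gt n b a"
proof
  assume ab: "revlex_gt n a b" and ba: "revlex_gt n b a"
  then have td: "tdeg n a = tdeg n b" unfolding revlex_gt_def by auto
  with ab obtain v where v: "v \<in> vars n" "lk a v < lk b v"
    "\<forall>w\<in>vars n. rank n w > rank n v \<longrightarrow> lk a w = lk b w" unfolding revlex_gt_def by auto
  from td ba obtain v' where v': "v' \<in> vars n" "lk b v' < lk a v'"
    "\<forall>w\<in>vars n. rank n w > rank n v' \<longrightarrow> lk b w = lk a w" unfolding revlex_gt_def by auto
  show False
  proof (cases "rank n v" "rank n v'" rule: linorder_cases)
    case less
    have "lk a v' = lk b v'" using v(3) v'(1) less by blast
    then show ?thesis using v'(2) by simp
  next
    case equal then have "v = v'" using v v' rank_inj by blast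
    then show ?thesis using v v' by simp
  next
    case greater
    have "lk b v = lk a v" using v'(3) v(1) greater by blast
    then show ?thesis using v(2) by simp
  qed
qed

lemma revlex_irrefl: "\<not> revlex_gt n a a"
  using revlex_asym by blast

lemma revlex_trans: "revlex_gt n a b \<Longrightarrow> revlex_gt n b c \<Longrightarrow> revlex_gt n a c"
proof -
  assume ab: "revlex_gt n a b" and bc: "revlex_gt n b c"
  show ?thesis
  proof (cases "tdeg n a = tdeg n b \<and> tdeg n b = tdeg n c")
    case False then show ?thesis using ab bc unfolding revlex_gt_def by auto
  next
    case True
    with ab obtain v where v: "v \<in> vars n" "lk a v < lk b v"
      "\<forall>w\<in>vars n. rank n w > rank n v \<longrightarrow> lk a w = lk b w" unfolding revlex_gt_def by auto
    from True bc obtain v' where v': "v' \<in> vars n" "lk b v' < lk c v'"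
      "\<forall>w\<in>vars n. rank n w > rank n v' \<longrightarrow> lk b w = lk c w" unfolding revlex_gt_def by auto
    show ?thesis
    proof (cases "rank n v" "rank n v'" rule: linorder_cases)
      case less
      then have "lk a v' < lk c v'" "\<forall>w\<in>vars n. rank n w > rank n v' \<longrightarrow> lk a w = lk c w"
        using v v' by auto
      then show ?thesis using True v'(1) unfolding revlex_gt_def by auto
    next
      case equal
      then have "v = v'" using v v' rank_inj by blast
      then have "lk a v < lk c v" "\<forall>w\<in>vars n. rank n w > rank n v \<longrightarrow> lk a w = lk c w"
        using v v' by auto
      then show ?thesis using True v(1) unfolding revlex_gt_def by auto
    next
      case greater
      then have "lk a v < lk c v" "\<forall>w\<in>vars n. rank n w > rank n v \<longrightarrow> lk a w = lk c w"
        using v v' by auto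
      then show ?thesis using True v(1) unfolding revlex_gt_def by auto
    qed
  qed
qed

lemma revlex_total:
  assumes "is_mon n a" "is_mon n b" "a \<noteq> b"
  shows "revlex_gt n a b \<or> revlex_gt n b a"
proof (cases "tdeg n a = tdeg n b")
  case False then show ?thesis unfolding revlex_gt_def by auto
next
  case True
  let ?D = "{v\<in>vars n. lk a v \<noteq> lk b v}"
  have "?D \<noteq> {}"
  proof
    assume "?D = {}"
    have "lk a v = lk b v" for v
    proof (cases "v \<in> vars n")
      case True then show ?thesis using \<open>?D = {}\<close> by auto
    next
      case False
      then have "v \<notin> Poly_Mapping.keys a" "v \<notin> Poly_Mapping.keys b"
        using assms unfolding is_mon_def by auto
      then show ?thesis by (simp add: in_keys_iff)
    qed
    then show False using assms(3) by (simp add: poly_mapping_eqI)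
  qed
  moreover have "finite ?D" by (simp add: vars_def)
  ultimately have "Max (rank n ` ?D) \<in> rank n ` ?D" by (intro Max_in) auto
  then obtain v where v1: "v \<in> ?D" "rank n v = Max (rank n ` ?D)" by auto
  have v: "v \<in> ?D" "\<forall>w\<in>?D. rank n w \<le> rank n v"
    using v1 \<open>finite ?D\<close> by auto
  then have eq: "\<forall>w\<in>vars n. rank n w > rank n v \<longrightarrow> lk a w = lk b w"
    using not_le by blast
  have vv: "v \<in> vars n" using v(1) by simp
  from v(1) have "lk a v < lk b v \<or> lk b v < lk a v" by auto
  then show ?thesis
  proof
    assume "lk a v < lk b v"
    then have "revlex_gt n a b" using True eq vv unfolding revlex_gt_def by blast
    then show ?thesis ..
  next
    assume "lk b v < lk a v"
    moreover have "\<forall>w\<in>vars n. rank n w > rank n v \<longrightarrow> lk b w = lk a w" using eq by simp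
    ultimately have "revlex_gt n b a" using True vv unfolding revlex_gt_def by auto
    then show ?thesis ..
  qed
qed

lemma revlex_max_exists:
  assumes "finite A" "A \<noteq> {}" "\<forall>m\<in>A. is_mon n m"
  shows "\<exists>m\<in>A. \<forall>m'\<in>A. m' \<noteq> m \<longrightarrow> revlex_gt n m m'"
  using assms
proof (induction A rule: finite_ne_induct)
  case (singleton x) then show ?case by simp
next
  case (insert x A)
  then obtain m where m: "m \<in> A" "\<forall>m'\<in>A. m' \<noteq> m \<longrightarrow> revlex_gt n m m'" by auto
  have "x \<noteq> m" using insert m by auto
  then have "revlex_gt n x m \<or> revlex_gt n m x" using revlex_total insert m by auto
  then show ?case
  proof
    assume "revlex_gt n x m"
    then have "\<forall>m'\<in>insert x A. m' \<noteq> x \<longrightarrow> revlex_gt n x m'"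
      using m revlex_trans by (metis insertE)
    then show ?thesis by blast
  next
    assume "revlex_gt n m x"
    then have "\<forall>m'\<in>insert x A. m' \<noteq> m \<longrightarrow> revlex_gt n m m'" using m by blast
    then show ?thesis using m by blast
  qed
qed

lemma in_mon_eqI:
  assumes "m \<in> Poly_Mapping.keys f" "\<forall>m'\<in>Poly_Mapping.keys f. m' \<noteq> m \<longrightarrow> revlex_gt n m m'"
  shows "in_mon n f = m"
  unfolding in_mon_def
proof (rule the_equality)
  show "m \<in> Poly_Mapping.keys f \<and> (\<forall>m'\<in>Poly_Mapping.keys f. m' \<noteq> m \<longrightarrow> revlex_gt n m m')"
    using assms by blast
  fix m1 assume "m1 \<in> Poly_Mapping.keys f \<and> (\<forall>m'\<in>Poly_Mapping.keys f. m' \<noteq> m1 \<longrightarrow> revlex_gt n m1 m')"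
  then have m1: "m1 \<in> Poly_Mapping.keys f" "\<And>m'. m'\<in>Poly_Mapping.keys f \<Longrightarrow> m' \<noteq> m1 \<Longrightarrow> revlex_gt n m1 m'"
    by auto
  show "m1 = m"
  proof (rule ccontr)
    assume ne: "m1 \<noteq> m"
    have "revlex_gt n m1 m" using m1(2)[OF assms(1)] ne by simp
    moreover have "revlex_gt n m m1" using assms(2) m1(1) ne by simp
    ultimately show False using revlex_asym by blast
  qed
qed

lemma in_mon_max:
  assumes "is_poly n f" "f \<noteq> 0"
  shows "in_mon n f \<in> Poly_Mapping.keys f \<and> (\<forall>m'\<in>Poly_Mapping.keys f. m' \<noteq> in_mon n f \<longrightarrow> revlex_gt n (in_mon n f) m')"
proof -
  obtain m where "m \<in> Poly_Mapping.keys f" "\<forall>m'\<in>Poly_Mapping.keys f. m' \<noteq> m \<longrightarrow> revlex_gt n m m'"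
    using revlex_max_exists[of "Poly_Mapping.keys f" n] assms unfolding is_poly_def by auto
  then show ?thesis using in_mon_eqI by metis
qed


lemma mem_vars[simp]: "X i \<in> vars n \<longleftrightarrow> 1 \<le> i \<and> i \<le> n" "Y i \<in> vars n \<longleftrightarrow> 1 \<le> i \<and> i \<le> n"
  by (auto simp: vars_def)

lemma tdeg_phi_mon: "tdeg n (phi_mon m) = tdeg n m"
  by (simp add: tdeg_def xdeg_def ydeg_def lookup_phi_mon sum.distrib)

lemma lookup_phi:
  "Poly_Mapping.lookup (phi f) M = (\<Sum>m\<in>{m\<in>Poly_Mapping.keys f. phi_mon m = M}. Poly_Mapping.lookup f m)"
proof -
  have "Poly_Mapping.lookup (phi f) M =
     (\<Sum>m\<in>Poly_Mapping.keys f. if phi_mon m = M then Poly_Mapping.lookup f m else 0)"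
    unfolding phi_def lookup_sum by (intro sum.cong) (auto simp: lookup_single_not_eq)
  then show ?thesis by (simp add: sum.inter_filter)
qed

lemma key:
  assumes srt: "sorted (is @ js)" and rng: "set (is @ js) \<subseteq> {1..n}"
    and u: "u = mon_of (map X is @ map Y js)"
    and yv: "ydeg n v = length js" and gt: "revlex_gt n u v"
  shows "revlex_gt n (phi_mon u) (phi_mon v)"
proof (cases "tdeg n u > tdeg n v")
  case True then show ?thesis by (simp add: revlex_gt_def tdeg_phi_mon)
next
  case False
  then have td: "tdeg n (phi_mon u) = tdeg n (phi_mon v)" and
    "\<exists>v0\<in>vars n. lk u v0 < lk v v0 \<and> (\<forall>w\<in>vars n. rank n w > rank n v0 \<longrightarrow> lk u w = lk v w)"
    using gt by (auto simp: revlex_gt_def tdeg_phi_mon)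
  then obtain v0 where v0: "v0 \<in> vars n" "lk u v0 < lk v v0"
    "\<And>w. w \<in> vars n \<Longrightarrow> rank n w > rank n v0 \<Longrightarrow> lk u w = lk v w" by blast
  have uX: "lk u (X i) = count (mset is) i" and uY: "lk u (Y i) = count (mset js) i" for i
    using u lookup_u by auto
  show ?thesis
  proof (cases v0)
    case (X k)
    with v0 have k: "1 \<le> k" "k \<le> n" by auto
    have "lk u (Y k) = lk v (Y k)" using v0(3)[of "Y k"] k X by simp
    then have "lk (phi_mon u) (X k) < lk (phi_mon v) (X k)"
      using v0(2) X by (simp add: lookup_phi_mon)
    moreover have "\<forall>w\<in>vars n. rank n w > rank n (X k) \<longrightarrow> lk (phi_mon u) w = lk (phi_mon v) w"
    proof (intro ballI impI)
      fix w assume w: "w \<in> vars n" "rank n w > rank n (X k)"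
      show "lk (phi_mon u) w = lk (phi_mon v) w"
      proof (cases w)
        case (X m)
        then have "lk u (X m) = lk v (X m)" "lk u (Y m) = lk v (Y m)"
          using v0(3)[of "X m"] v0(3)[of "Y m"] w \<open>v0 = X k\<close> by auto
        then show ?thesis using X by (simp add: lookup_phi_mon)
      next
        case (Y m) then show ?thesis by (simp add: lookup_phi_mon)
      qed
    qed
    ultimately show ?thesis using td k unfolding revlex_gt_def by force
  next
    case (Y k)
    with v0 have k: "1 \<le> k" "k \<le> n" by auto
    have aboveY: "lk u (Y m) = lk v (Y m)" if "k < m" "m \<le> n" for m
      using v0(3)[of "Y m"] that k Y by simp
    have "\<exists>j\<in>set js. j < k"
    proof (rule ccontr)
      assume "\<not> ?thesis"
      then have "set js \<subseteq> {k..n}" using rng by (auto simp: not_less)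
      then have s1: "(\<Sum>i\<in>{k..n}. lk u (Y i)) = length js"
        unfolding uY by (subst sum_count_size) auto
      have "(\<Sum>i\<in>{Suc k..n}. lk u (Y i)) = (\<Sum>i\<in>{Suc k..n}. lk v (Y i))"
        using aboveY by (intro sum.cong) auto
      then have "(\<Sum>i\<in>{k..n}. lk u (Y i)) < (\<Sum>i\<in>{k..n}. lk v (Y i))"
        using v0(2) Y k by (simp add: sum.atLeast_Suc_atMost)
      also have "\<dots> \<le> (\<Sum>i\<in>{1..n}. lk v (Y i))"
        using k by (intro sum_mono2) auto
      also have "\<dots> = length js" using yv by (simp add: ydeg_def)
      finally show False using s1 by simp
    qed
    then obtain j where j: "j \<in> set js" "j < k" by blast
    have uX0: "lk u (X m) = 0" if "k \<le> m" for m
    proof -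
      have "m \<notin> set is"
      proof
        assume "m \<in> set is"
        then have "m \<le> j" using srt j by (auto simp: sorted_append)
        then show False using j that by simp
      qed
      then show ?thesis by (simp add: uX count_eq_zero_iff)
    qed
    define W where "W = {m\<in>{k<..n}. lk v (X m) > 0}"
    define m0 where "m0 = (if W = {} then k else Max W)"
    have fW: "finite W" unfolding W_def by auto
    have m0: "k \<le> m0 \<and> m0 \<le> n"
    proof (cases "W = {}")
      case True then show ?thesis using k unfolding m0_def by simp
    next
      case False
      then have "Max W \<in> W" using Max_in[OF fW] by blast
      then show ?thesis using False unfolding m0_def W_def by auto
    qed
    have vX0: "lk v (X m) = 0" if "m0 < m" "m \<le> n" for m
    proof (rule ccontr)
      assume "lk v (X m) \<noteq> 0"
      then have "m \<in> W" using that m0 k unfolding W_def by auto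
      then have "m \<le> m0" unfolding m0_def using fW by auto
      then show False using that by simp
    qed
    have "lk (phi_mon u) (X m0) < lk (phi_mon v) (X m0)"
    proof (cases "W = {}")
      case True
      then show ?thesis using uX0[of k] v0(2) Y unfolding m0_def by (simp add: lookup_phi_mon)
    next
      case False
      then have "m0 \<in> W" unfolding m0_def using Max_in[OF fW] by auto
      then show ?thesis using uX0[of m0] aboveY[of m0] unfolding W_def by (simp add: lookup_phi_mon)
    qed
    moreover have "\<forall>w\<in>vars n. rank n w > rank n (X m0) \<longrightarrow> lk (phi_mon u) w = lk (phi_mon v) w"
    proof (intro ballI impI)
      fix w assume w: "w \<in> vars n" "rank n w > rank n (X m0)"
      show "lk (phi_mon u) w = lk (phi_mon v) w"
      proof (cases w)
        case (X m)
        then have "m0 < m" "m \<le> n" using w by auto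
        then show ?thesis using X uX0[of m] vX0[of m] aboveY[of m] m0 by (simp add: lookup_phi_mon)
      next
        case (Y m) then show ?thesis by (simp add: lookup_phi_mon)
      qed
    qed
    moreover have "X m0 \<in> vars n" using m0 k by simp
    ultimately show ?thesis using td unfolding revlex_gt_def by blast
  qed
qed


theorem lemma3p4:
  fixes f :: "'k::field mpoly" and n s t :: nat
  assumes "is_poly n f"
    and "f \<noteq> 0"
    and "bihom n s t f"
    and "\<exists>is js. length is = s \<and> length js = t \<and> sorted (is @ js)
           \<and> set (is @ js) \<subseteq> {1..n}
           \<and> in_mon n f = mon_of (map X is @ map Y js)"
  shows "in_mon n (phi f) = phi_mon (in_mon n f)
         \<and> in_mon n f = upper n t (phi_mon (in_mon n f))"
proof -
  obtain "is" js where ij: "length is = s" "length js = t" "sorted (is @ js)"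
    "set (is @ js) \<subseteq> {1..n}" "in_mon n f = mon_of (map X is @ map Y js)"
    using assms(4) by blast
  define u where "u = in_mon n f"
  have umax: "u \<in> Poly_Mapping.keys f" "\<And>m'. m' \<in> Poly_Mapping.keys f \<Longrightarrow> m' \<noteq> u \<Longrightarrow> revlex_gt n u m'"
    using in_mon_max[OF assms(1,2)] unfolding u_def by auto
  have gtphi: "revlex_gt n (phi_mon u) (phi_mon v)" if "v \<in> Poly_Mapping.keys f" "v \<noteq> u" for v
  proof (rule key[OF ij(3,4)])
    show "u = mon_of (map X is @ map Y js)" using ij(5) u_def by simp
    show "ydeg n v = length js" using assms(3) that ij(2) unfolding bihom_def by auto
    show "revlex_gt n u v" using umax that by blast
  qed
  have "{m\<in>Poly_Mapping.keys f. phi_mon m = phi_mon u} = {u}"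
    using umax(1) gtphi revlex_irrefl by fastforce
  then have "Poly_Mapping.lookup (phi f) (phi_mon u) = Poly_Mapping.lookup f u"
    by (simp add: lookup_phi)
  then have uin: "phi_mon u \<in> Poly_Mapping.keys (phi f)"
    using umax(1) by (simp add: in_keys_iff)
  have others: "\<forall>M\<in>Poly_Mapping.keys (phi f). M \<noteq> phi_mon u \<longrightarrow> revlex_gt n (phi_mon u) M"
  proof (intro ballI impI)
    fix M assume M: "M \<in> Poly_Mapping.keys (phi f)" "M \<noteq> phi_mon u"
    have "Poly_Mapping.lookup (phi f) M \<noteq> 0" using M(1) by (simp add: in_keys_iff)
    then have "{m\<in>Poly_Mapping.keys f. phi_mon m = M} \<noteq> {}"
      unfolding lookup_phi by (metis sum.empty)
    then obtain v where "v \<in> Poly_Mapping.keys f" "phi_mon v = M" by blast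
    then show "revlex_gt n (phi_mon u) M" using gtphi M(2) by blast
  qed
  have c1: "in_mon n (phi f) = phi_mon u" by (rule in_mon_eqI[OF uin others])
  have "\<And>i. lk (phi_mon u) (X i) = count (mset (is @ js)) i"
    using ij(5) u_def by (simp add: lookup_phi_mon lookup_u)
  then have "xindices n (phi_mon u) = is @ js"
    unfolding xindices_def using concat_rep_eq[OF ij(3,4)] by simp
  then have c2: "upper n t (phi_mon u) = u"
    unfolding upper_def using ij u_def by simp
  show ?thesis using c1 c2 u_def by simp
qed

end
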